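(* Let $\kappa\in[0,1)$. There exists a unique solution $x\in(0,K(\kappa))$ of the equation $$\kappa'\,\mathrm{sc}_\kappa(x)-\mathrm{dc}_\kappa(x)+2\kappa'\,\mathrm{nc}_\kappa(x)=0$$ if and only if $\kappa\in\left(\tfrac{\sqrt3}{2},1\right)$ (and for $\kappa\notin(\tfrac{\sqrt3}{2},1)$ there is no solution in $(0,K(\kappa))$).
   Context: $\kappa'=\sqrt{1-\kappa^2}$; $\mathrm{sn}_\kappa,\mathrm{cn}_\kappa,\mathrm{dn}_\kappa$ are the Jacobi elliptic functions with modulus $\kappa$, with $\mathrm{sc}=\mathrm{sn}/\mathrm{cn}$, $\mathrm{nc}=1/\mathrm{cn}$, $\mathrm{dc}=\mathrm{dn}/\mathrm{cn}$. $K(\kappa)=\int_0^{\pi/2}(1-\kappa^2\sin^2\theta)^{-1/2}d\theta$ is the complete elliptic integral of the first kind. *)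

theory Defs
  imports "HOL-Analysis.Analysis"
begin

definition ell_integrand :: "real \<Rightarrow> real \<Rightarrow> real" where
  "ell_integrand k \<theta> = 1 / sqrt (1 - k\<^sup>2 * (sin \<theta>)\<^sup>2)"

definition ellF :: "real \<Rightarrow> real \<Rightarrow> real" where
  "ellF k \<phi> = (if 0 \<le> \<phi> then integral {0..\<phi>} (ell_integrand k)
                 else - integral {\<phi>..0} (ell_integrand k))"

definition ellK :: "real \<Rightarrow> real" where
  "ellK k = integral {0..pi/2} (ell_integrand k)"

definition jam :: "real \<Rightarrow> real \<Rightarrow> real" where
  "jam k x = (THE \<phi>. ellF k \<phi> = x)"

definition jsn :: "real \<Rightarrow> real \<Rightarrow> real" where
  "jsn k x = sin (jam k x)"

definition jcn :: "real \<Rightarrow> real \<Rightarrow> real" where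
  "jcn k x = cos (jam k x)"

definition jdn :: "real \<Rightarrow> real \<Rightarrow> real" where
  "jdn k x = sqrt (1 - k\<^sup>2 * (jsn k x)\<^sup>2)"

definition jsc :: "real \<Rightarrow> real \<Rightarrow> real" where
  "jsc k x = jsn k x / jcn k x"

definition jnc :: "real \<Rightarrow> real \<Rightarrow> real" where
  "jnc k x = 1 / jcn k x"

definition jdc :: "real \<Rightarrow> real \<Rightarrow> real" where
  "jdc k x = jdn k x / jcn k x"

definition compl_mod :: "real \<Rightarrow> real" where
  "compl_mod k = sqrt (1 - k\<^sup>2)"

end

theory Submission
  imports Defs
begin

lemma ell_pos:
  fixes k t :: real
  assumes "0 \<le> k" "k < 1"
  shows "0 < 1 - k\<^sup>2 * (sin t)\<^sup>2"
proof -
  have "(sin t)\<^sup>2 \<le> 1" using abs_sin_le_one[of t] abs_square_le_1[of "sin t"] by simp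
  moreover have "k\<^sup>2 < 1" using assms by (simp add: power_less_one_iff abs_square_less_1)
  ultimately have "k\<^sup>2 * (sin t)\<^sup>2 < 1"
    by (metis mult_left_le mult.commute order_le_less_trans zero_le_power2)
  thus ?thesis by simp
qed

lemma ell_cont:
  assumes "0 \<le> k" "k < 1"
  shows "continuous_on S (ell_integrand k)"
proof -
  have "\<forall>t\<in>S. sqrt (1 - k\<^sup>2 * (sin t)\<^sup>2) \<noteq> 0"
  proof
    fix t
    have "0 < sqrt (1 - k\<^sup>2 * (sin t)\<^sup>2)" using ell_pos[OF assms, of t] by simp
    thus "sqrt (1 - k\<^sup>2 * (sin t)\<^sup>2) \<noteq> 0" by simp
  qed
  thus ?thesis unfolding ell_integrand_def
    by (intro continuous_intros) auto
qed

lemma ell_ge1: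
  assumes "0 \<le> k" "k < 1"
  shows "1 \<le> ell_integrand k t"
proof -
  have p: "0 < 1 - k\<^sup>2 * (sin t)\<^sup>2" by (rule ell_pos[OF assms])
  have "1 - k\<^sup>2 * (sin t)\<^sup>2 \<le> 1" by simp
  hence "sqrt (1 - k\<^sup>2 * (sin t)\<^sup>2) \<le> 1" by simp
  moreover have "0 < sqrt (1 - k\<^sup>2 * (sin t)\<^sup>2)" using p by simp
  ultimately show ?thesis unfolding ell_integrand_def by simp
qed

lemma ell_int:
  assumes "0 \<le> k" "k < 1"
  shows "ell_integrand k integrable_on {a..b}"
  by (rule integrable_continuous_real[OF ell_cont[OF assms]])

lemma int_ge:
  assumes "0 \<le> k" "k < 1" "a \<le> b"
  shows "b - a \<le> integral {a..b} (ell_integrand k)"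
proof -
  have "integral {a..b} (\<lambda>x. 1::real) \<le> integral {a..b} (ell_integrand k)"
    by (rule integral_le) (auto intro: ell_int[OF assms(1,2)] ell_ge1[OF assms(1,2)])
  thus ?thesis using assms(3) by (simp add: integral_const_real)
qed

lemma ellF_mono:
  assumes "0 \<le> k" "k < 1" "0 \<le> a" "a \<le> b"
  shows "ellF k b - ellF k a \<ge> b - a"
proof -
  have "integral {0..a} (ell_integrand k) + integral {a..b} (ell_integrand k)
        = integral {0..b} (ell_integrand k)"
    by (rule Henstock_Kurzweil_Integration.integral_combine) (use assms ell_int[OF assms(1,2)] in auto)
  thus ?thesis using int_ge[OF assms(1,2,4)] assms unfolding ellF_def by simp
qed

lemma ellF_neg:
  assumes "0 \<le> k" "k < 1" "\<phi> < 0"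
  shows "ellF k \<phi> < 0"
  using int_ge[OF assms(1,2), of \<phi> 0] assms unfolding ellF_def by simp

lemma ellF_0: "ellF k 0 = 0" unfolding ellF_def by simp

lemma jam_eq:
  assumes "0 \<le> k" "k < 1" "0 \<le> \<phi>"
  shows "jam k (ellF k \<phi>) = \<phi>"
  unfolding jam_def
proof (rule the_equality)
  fix \<psi> assume h: "ellF k \<psi> = ellF k \<phi>"
  have "ellF k \<phi> \<ge> \<phi>" using ellF_mono[OF assms(1,2) order_refl assms(3)] ellF_0 by simp
  have "\<psi> \<ge> 0"
  proof (rule ccontr)
    assume "\<not> \<psi> \<ge> 0"
    hence "ellF k \<psi> < 0" using ellF_neg[OF assms(1,2)] by simp
    thus False using h assms(3) \<open>ellF k \<phi> \<ge> \<phi>\<close> by simp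
  qed
  show "\<psi> = \<phi>"
  proof (cases "\<psi> \<le> \<phi>")
    case True thus ?thesis using ellF_mono[OF assms(1,2) \<open>\<psi> \<ge> 0\<close> True] h by simp
  next
    case False thus ?thesis using ellF_mono[OF assms(1,2) assms(3), of \<psi>] h by simp
  qed
qed simp

lemma ellK_eq: "ellK k = ellF k (pi/2)"
  unfolding ellK_def ellF_def by simp

lemma jam_range:
  assumes "0 \<le> k" "k < 1" "x \<in> {0<..<ellK k}"
  shows "\<exists>\<phi>. 0 < \<phi> \<and> \<phi> < pi/2 \<and> ellF k \<phi> = x"
proof -
  have c: "continuous_on {0..pi/2} (ellF k)"
  proof -
    have "continuous_on {0..pi/2} (\<lambda>t. integral {0..t} (ell_integrand k))"
      by (rule indefinite_integral_continuous_1[OF ell_int[OF assms(1,2)]])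
    thus ?thesis by (rule continuous_on_eq) (auto simp: ellF_def)
  qed
  obtain \<phi> where p: "0 \<le> \<phi>" "\<phi> \<le> pi/2" "ellF k \<phi> = x"
    using IVT'[of "ellF k" 0 x "pi/2"] c assms(3) ellK_eq ellF_0 by force
  have "\<phi> \<noteq> 0" using p assms(3) ellF_0 by auto
  moreover have "\<phi> \<noteq> pi/2"
  proof
    assume e: "\<phi> = pi/2" thus False using p(3)[unfolded e] assms(3) ellK_eq[of k] by simp
  qed
  ultimately show ?thesis using p by (intro exI[of _ \<phi>]) auto
qed

lemma ellF_range:
  assumes "0 \<le> k" "k < 1" "0 < \<phi>" "\<phi> < pi/2"
  shows "ellF k \<phi> \<in> {0<..<ellK k}"
  using ellF_mono[OF assms(1,2), of 0 \<phi>] ellF_mono[OF assms(1,2), of \<phi> "pi/2"] assms ellF_0 ellK_eq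
  by auto

lemma alg:
  fixes k s :: real
  assumes "0 \<le> k" "k < 1" "0 < s" "s < 1"
  shows "(sqrt (1 - k\<^sup>2) * (s + 2) = sqrt (1 - k\<^sup>2 * s\<^sup>2))
     \<longleftrightarrow> (k\<^sup>2 > 3/4 \<and> s = 1 - 4 * (1 - k\<^sup>2))"
proof -
  define c where "c = 1 - k\<^sup>2"
  have c0: "0 < c" using assms unfolding c_def by (simp add: power_less_one_iff abs_square_less_1)
  have r0: "0 \<le> 1 - k\<^sup>2 * s\<^sup>2"
  proof -
    have "k\<^sup>2 \<le> 1" "s\<^sup>2 \<le> 1" using assms by (auto simp: abs_square_le_1)
    hence "k\<^sup>2 * s\<^sup>2 \<le> 1" by (metis mult_le_one zero_le_power2)
    thus ?thesis by simp
  qed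
  have l: "sqrt c * (s + 2) = sqrt (c * (s+2)\<^sup>2)" using assms by (simp add: real_sqrt_mult)
  have "(sqrt (1 - k\<^sup>2) * (s + 2) = sqrt (1 - k\<^sup>2 * s\<^sup>2)) \<longleftrightarrow> c * (s+2)\<^sup>2 = 1 - k\<^sup>2 * s\<^sup>2"
    using l r0 c0 assms unfolding c_def by (metis real_sqrt_eq_iff)
  also have "\<dots> \<longleftrightarrow> (s + 2*c)\<^sup>2 = (1 - 2*c)\<^sup>2"
    unfolding c_def by (simp add: algebra_simps power2_eq_square)
  also have "\<dots> \<longleftrightarrow> s + 2*c = \<bar>1 - 2*c\<bar>"
    using c0 assms by (metis abs_of_pos add_pos_pos mult_pos_pos power2_abs real_sqrt_abs zero_less_numeral)
  also have "\<dots> \<longleftrightarrow> (c < 1/4 \<and> s = 1 - 4*c)"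
    using c0 assms by (auto simp: abs_if)
  also have "\<dots> \<longleftrightarrow> (k\<^sup>2 > 3/4 \<and> s = 1 - 4 * (1 - k\<^sup>2))" unfolding c_def by auto
  finally show ?thesis .
qed

lemma kap_iff:
  fixes k :: real assumes "0 \<le> k" "k < 1"
  shows "k \<in> {sqrt 3 / 2<..<1} \<longleftrightarrow> k\<^sup>2 > 3/4"
proof -
  have "sqrt 3 / 2 = sqrt (3/4)" by (simp add: real_sqrt_divide)
  hence "sqrt 3 / 2 < k \<longleftrightarrow> sqrt (3/4) < sqrt (k\<^sup>2)" using assms by simp
  also have "\<dots> \<longleftrightarrow> 3/4 < k\<^sup>2" by (rule real_sqrt_less_iff)
  finally show ?thesis using assms by auto
qed

lemma eq_char:
  fixes \<kappa> x :: real
  assumes "0 \<le> \<kappa>" "\<kappa> < 1" "x \<in> {0<..<ellK \<kappa>}"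
  shows "(compl_mod \<kappa> * jsc \<kappa> x - jdc \<kappa> x + 2 * compl_mod \<kappa> * jnc \<kappa> x = 0)
     \<longleftrightarrow> (\<kappa>\<^sup>2 > 3/4 \<and> sin (jam \<kappa> x) = 1 - 4 * (1 - \<kappa>\<^sup>2))"
proof -
  obtain \<phi> where p: "0 < \<phi>" "\<phi> < pi/2" "ellF \<kappa> \<phi> = x" using jam_range[OF assms] by blast
  have j: "jam \<kappa> x = \<phi>" using jam_eq[OF assms(1,2), of \<phi>] p by simp
  have cp: "cos \<phi> > 0" using p by (intro cos_gt_zero_pi) auto
  have s1: "0 < sin \<phi>" using p by (intro sin_gt_zero) auto
  have "(cos \<phi>)\<^sup>2 > 0" using cp by simp
  hence "(sin \<phi>)\<^sup>2 < 1" using sin_squared_eq[of \<phi>] by linarith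
  hence "sin \<phi> < 1" by (simp add: power2_less_1_iff)
  note s = s1 this
  have "(compl_mod \<kappa> * jsc \<kappa> x - jdc \<kappa> x + 2 * compl_mod \<kappa> * jnc \<kappa> x = 0)
     \<longleftrightarrow> (sqrt (1 - \<kappa>\<^sup>2) * sin \<phi> - sqrt (1 - \<kappa>\<^sup>2 * (sin \<phi>)\<^sup>2) + 2 * sqrt (1 - \<kappa>\<^sup>2)) / cos \<phi> = 0"
    unfolding compl_mod_def jsc_def jdc_def jnc_def jdn_def jsn_def jcn_def j
    by (simp add: add_divide_distrib diff_divide_distrib)
  also have "\<dots> \<longleftrightarrow> sqrt (1 - \<kappa>\<^sup>2) * (sin \<phi> + 2) = sqrt (1 - \<kappa>\<^sup>2 * (sin \<phi>)\<^sup>2)"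
    using cp by (auto simp: algebra_simps)
  also have "\<dots> \<longleftrightarrow> (\<kappa>\<^sup>2 > 3/4 \<and> sin \<phi> = 1 - 4 * (1 - \<kappa>\<^sup>2))"
    by (rule alg[OF assms(1,2) s])
  finally show ?thesis using j by simp
qed

theorem mainTheorem13:
  fixes \<kappa> :: real
  assumes "0 \<le> \<kappa>" and "\<kappa> < 1"
  shows "((\<exists>!x. x \<in> {0<..<ellK \<kappa>} \<and>
             compl_mod \<kappa> * jsc \<kappa> x - jdc \<kappa> x + 2 * compl_mod \<kappa> * jnc \<kappa> x = 0)
          \<longleftrightarrow> \<kappa> \<in> {sqrt 3 / 2<..<1})
       \<and> (\<kappa> \<notin> {sqrt 3 / 2<..<1} \<longrightarrow>
          \<not> (\<exists>x \<in> {0<..<ellK \<kappa>}.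
             compl_mod \<kappa> * jsc \<kappa> x - jdc \<kappa> x + 2 * compl_mod \<kappa> * jnc \<kappa> x = 0))"
proof -
  note E = eq_char[OF assms]
  note KI = kap_iff[OF assms]
  have no: "\<not> (\<exists>x \<in> {0<..<ellK \<kappa>}.
             compl_mod \<kappa> * jsc \<kappa> x - jdc \<kappa> x + 2 * compl_mod \<kappa> * jnc \<kappa> x = 0)"
    if "\<kappa> \<notin> {sqrt 3 / 2<..<1}" using that E KI by blast
  have ex: "\<exists>!x. x \<in> {0<..<ellK \<kappa>} \<and>
             compl_mod \<kappa> * jsc \<kappa> x - jdc \<kappa> x + 2 * compl_mod \<kappa> * jnc \<kappa> x = 0"
    if k: "\<kappa>\<^sup>2 > 3/4"
  proof -
    define s where "s = 1 - 4 * (1 - \<kappa>\<^sup>2)"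
    have s: "0 < s" "s < 1" using k assms unfolding s_def
      by (auto simp: power_less_one_iff abs_square_less_1)
    define \<phi> where "\<phi> = arcsin s"
    have a1: "arcsin 0 < arcsin s" by (rule arcsin_less_arcsin) (use s in auto)
    have a2: "arcsin s < arcsin 1" by (rule arcsin_less_arcsin) (use s in auto)
    have ph: "0 < \<phi>" "\<phi> < pi/2" "sin \<phi> = s" unfolding \<phi>_def using s a1 a2
      by auto
    show ?thesis
    proof (rule ex1I[of _ "ellF \<kappa> \<phi>"])
      have r: "ellF \<kappa> \<phi> \<in> {0<..<ellK \<kappa>}" by (rule ellF_range[OF assms ph(1,2)])
      moreover have "jam \<kappa> (ellF \<kappa> \<phi>) = \<phi>" using jam_eq[OF assms] ph by simp
      ultimately show "ellF \<kappa> \<phi> \<in> {0<..<ellK \<kappa>} \<and>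
           compl_mod \<kappa> * jsc \<kappa> (ellF \<kappa> \<phi>) - jdc \<kappa> (ellF \<kappa> \<phi>) + 2 * compl_mod \<kappa> * jnc \<kappa> (ellF \<kappa> \<phi>) = 0"
        using eq_char[OF assms r] k ph s_def by simp
    next
      fix y assume y: "y \<in> {0<..<ellK \<kappa>} \<and>
           compl_mod \<kappa> * jsc \<kappa> y - jdc \<kappa> y + 2 * compl_mod \<kappa> * jnc \<kappa> y = 0"
      obtain \<psi> where q: "0 < \<psi>" "\<psi> < pi/2" "ellF \<kappa> \<psi> = y" using jam_range[OF assms] y by blast
      have "jam \<kappa> y = \<psi>" using jam_eq[OF assms, of \<psi>] q by simp
      hence "sin \<psi> = sin \<phi>" using eq_char[OF assms] y ph s_def by auto
      have "\<psi> = arcsin (sin \<psi>)" using q by (intro arcsin_sin[symmetric]) auto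
      also have "\<dots> = arcsin (sin \<phi>)" using \<open>sin \<psi> = sin \<phi>\<close> by simp
      also have "\<dots> = \<phi>" using ph by (intro arcsin_sin) auto
      finally have "\<psi> = \<phi>" .
      thus "y = ellF \<kappa> \<phi>" using q by simp
    qed
  qed
  show ?thesis using no ex E KI by blast
qed

end
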